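(* If $L$ is a regular language, then ${\rm bdr}(L)$ is context-free.
   Context: For a word $w=a_1a_2\cdots a_n$, ${\rm odd}(w)=a_1a_3a_5\cdots$ (letters at odd positions) and ${\rm even}(w)=a_2a_4\cdots$ (letters at even positions). $x^R$ denotes the reversal of $x$. ${\rm bdr}(w)={\rm odd}(w)\,{\rm even}(w)^R$, and ${\rm bdr}(L)=\{{\rm bdr}(w):w\in L\}$. *)

theory Defs
  imports Main
begin

text \<open>Positions are counted from 1: odds w = a1 a3 a5 ..., evens w = a2 a4 ...\<close>

fun odds :: "'a list \<Rightarrow> 'a list" where
  "odds [] = []"
| "odds [x] = [x]"
| "odds (x # y # xs) = x # odds xs"

fun evens :: "'a list \<Rightarrow> 'a list" where
  "evens [] = []"
| "evens [x] = []"
| "evens (x # y # xs) = y # evens xs"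

definition bdr :: "'a list \<Rightarrow> 'a list" where
  "bdr w = odds w @ rev (evens w)"

definition bdr_lang :: "'a list set \<Rightarrow> 'a list set" where
  "bdr_lang L = bdr ` L"

datatype 'a rexp = Zero | One | Atom 'a | Plus "'a rexp" "'a rexp"
  | Times "'a rexp" "'a rexp" | Star "'a rexp"

definition conc :: "'a list set \<Rightarrow> 'a list set \<Rightarrow> 'a list set" where
  "conc A B = {u @ v | u v. u \<in> A \<and> v \<in> B}"

inductive_set star :: "'a list set \<Rightarrow> 'a list set" for A where
  star_Nil: "[] \<in> star A"
| star_app: "u \<in> A \<Longrightarrow> v \<in> star A \<Longrightarrow> u @ v \<in> star A"

fun lang :: "'a rexp \<Rightarrow> 'a list set" where
  "lang Zero = {}"
| "lang One = {[]}"
| "lang (Atom a) = {[a]}"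
| "lang (Plus r s) = lang r \<union> lang s"
| "lang (Times r s) = conc (lang r) (lang s)"
| "lang (Star r) = star (lang r)"

definition regular :: "'a list set \<Rightarrow> bool" where
  "regular L \<longleftrightarrow> (\<exists>r. lang r = L)"

text \<open>A grammar: finite set of productions over nonterminals (nat) and terminals 'a.
  Symbols are Inl nonterminal / Inr terminal.\<close>

type_synonym 'a cfg_prods = "(nat \<times> (nat + 'a) list) set"

inductive cfg_step :: "'a cfg_prods \<Rightarrow> (nat + 'a) list \<Rightarrow> (nat + 'a) list \<Rightarrow> bool"
  for P where
  "(A, rhs) \<in> P \<Longrightarrow> cfg_step P (u @ [Inl A] @ v) (u @ rhs @ v)"

definition cfg_lang :: "'a cfg_prods \<Rightarrow> nat \<Rightarrow> 'a list set" where
  "cfg_lang P S = {w. (cfg_step P)\<^sup>*\<^sup>* [Inl S] (map Inr w)}"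

definition context_free :: "'a list set \<Rightarrow> bool" where
  "context_free L \<longleftrightarrow> (\<exists>P S. finite P \<and> cfg_lang P S = L)"

end

theory Submission
  imports Defs "HOL-Library.Countable"
begin

lemma conc_assoc: "conc (conc A B) C = conc A (conc B C)"
  unfolding conc_def by (auto, metis append_assoc, metis append_assoc)

lemma conc_Nil_right[simp]: "conc A {[]} = A"
  unfolding conc_def by auto

lemma conc_Nil_left[simp]: "conc {[]} A = A"
  unfolding conc_def by auto

lemma conc_single_left[simp]: "conc {[a]} A = (Cons a) ` A"
  unfolding conc_def by auto

lemma conc_single_right[simp]: "conc A {[a]} = (\<lambda>x. x @ [a]) ` A"
  unfolding conc_def by auto

lemma conc_mono: "A \<subseteq> A' \<Longrightarrow> B \<subseteq> B' \<Longrightarrow> conc A B \<subseteq> conc A' B'"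
  unfolding conc_def by blast

definition bdr2 :: "'a list \<Rightarrow> 'a list" where
  "bdr2 w = (case w of [] \<Rightarrow> [] | y # w' \<Rightarrow> bdr w' @ [y])"

lemma bdr_Nil[simp]: "bdr [] = []"
  by (simp add: bdr_def)

lemma bdr_Cons: "bdr (a # w) = a # bdr2 w"
  by (cases w) (auto simp: bdr_def bdr2_def)

lemma bdr2_Nil[simp]: "bdr2 [] = []"
  by (simp add: bdr2_def)

lemma bdr2_Cons: "bdr2 (a # w) = bdr w @ [a]"
  by (simp add: bdr2_def)

section \<open>Epsilon-NFAs\<close>

inductive path :: "('s \<times> 'a option \<times> 's) set \<Rightarrow> 's \<Rightarrow> 'a list \<Rightarrow> 's \<Rightarrow> bool"
  for T where
  pnil: "path T p [] p"
| pa: "(p, Some a, p') \<in> T \<Longrightarrow> path T p' w q \<Longrightarrow> path T p (a # w) q"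
| pe: "(p, None, p') \<in> T \<Longrightarrow> path T p' w q \<Longrightarrow> path T p w q"

lemma path_trans: "path T p u q \<Longrightarrow> path T q v r \<Longrightarrow> path T p (u @ v) r"
  by (induction rule: path.induct) (auto intro: path.intros)

lemma path_mono: "path T p w q \<Longrightarrow> T \<subseteq> T' \<Longrightarrow> path T' p w q"
  by (induction rule: path.induct) (auto intro: path.intros)

definition tag :: "nat \<Rightarrow> (nat list \<times> 'a option \<times> nat list) set \<Rightarrow> (nat list \<times> 'a option \<times> nat list) set" where
  "tag k T = (\<lambda>(p, x, q). (k # p, x, k # q)) ` T"

lemma tag_mem[simp]: "(k # p, x, k # q) \<in> tag k T \<longleftrightarrow> (p, x, q) \<in> T"
  unfolding tag_def by force

lemma tag_mem2: "(p, x, q) \<in> tag k T \<Longrightarrow> \<exists>p' q'. p = k # p' \<and> q = k # q' \<and> (p', x, q') \<in> T"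
  unfolding tag_def by auto

lemma finite_tag[simp]: "finite T \<Longrightarrow> finite (tag k T)"
  unfolding tag_def by simp

lemma path_tag: "path T p w q \<Longrightarrow> path (tag k T) (k # p) w (k # q)"
proof (induction rule: path.induct)
  case (pnil p) then show ?case by (rule path.pnil)
next
  case (pa p a p' w q) then show ?case by (metis path.pa tag_mem)
next
  case (pe p p' w q) then show ?case by (metis path.pe tag_mem)
qed

lemma path_sound:
  assumes "path T p w q" "[] \<in> Lg q"
    and "\<And>s s'. (s, None, s') \<in> T \<Longrightarrow> Lg s' \<subseteq> Lg s"
    and "\<And>s a s' w'. (s, Some a, s') \<in> T \<Longrightarrow> w' \<in> Lg s' \<Longrightarrow> a # w' \<in> Lg s"
  shows "w \<in> Lg p"
  using assms(1,2) by induction (use assms in auto)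

lemma path_empty: "path {} p w q \<Longrightarrow> p = q \<and> w = []"
  by (induction rule: path.induct) auto

fun nfa :: "'a rexp \<Rightarrow> (nat list \<times> 'a option \<times> nat list) set \<times> nat list \<times> nat list" where
  "nfa Zero = ({}, [], [1])"
| "nfa One = ({}, [], [])"
| "nfa (Atom a) = ({([], Some a, [1])}, [], [1])"
| "nfa (Plus r s) = (case nfa r of (T1, i1, f1) \<Rightarrow> case nfa s of (T2, i2, f2) \<Rightarrow>
     (tag 0 T1 \<union> tag 1 T2 \<union> {([], None, 0 # i1), ([], None, 1 # i2), (0 # f1, None, [2]), (1 # f2, None, [2])}, [], [2]))"
| "nfa (Times r s) = (case nfa r of (T1, i1, f1) \<Rightarrow> case nfa s of (T2, i2, f2) \<Rightarrow>
     (tag 0 T1 \<union> tag 1 T2 \<union> {(0 # f1, None, 1 # i2)}, 0 # i1, 1 # f2))"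
| "nfa (Star r) = (case nfa r of (T1, i1, f1) \<Rightarrow>
     (tag 0 T1 \<union> {([], None, 0 # i1), (0 # f1, None, [])}, [], []))"

lemma nfa_correct:
  "finite (fst (nfa r)) \<and> (\<forall>w. path (fst (nfa r)) (fst (snd (nfa r))) w (snd (snd (nfa r))) \<longleftrightarrow> w \<in> lang r)"
proof (induction r)
  case Zero then show ?case by (auto dest: path_empty)
next
  case One then show ?case by (auto dest: path_empty intro: pnil)
next
  case (Atom a)
  have "path {([], Some a, [1::nat])} [] w [1] \<longleftrightarrow> w = [a]" for w
  proof
    assume "path {([], Some a, [1::nat])} [] w [1]"
    define Lg :: "nat list \<Rightarrow> _" where "Lg = (\<lambda>s. if s = [] then {[a]} else {[]})"
    have "w \<in> Lg []"
      by (rule path_sound[OF \<open>path _ _ w _\<close>]) (auto simp: Lg_def)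
    then show "w = [a]" by (simp add: Lg_def)
  next
    assume "w = [a]" then show "path {([], Some a, [1::nat])} [] w [1]"
      by (auto intro: pa pnil)
  qed
  then show ?case by simp
next
  case (Plus r s)
  obtain T1 i1 f1 where n1: "nfa r = (T1, i1, f1)" by (cases "nfa r")
  obtain T2 i2 f2 where n2: "nfa s = (T2, i2, f2)" by (cases "nfa s")
  define T where "T = tag 0 T1 \<union> tag 1 T2 \<union> {([], None, 0 # i1), ([], None, 1 # i2), (0 # f1, None, [2]), (1 # f2, None, [2::nat])}"
  have IH1: "finite T1" "\<And>w. path T1 i1 w f1 \<longleftrightarrow> w \<in> lang r" using Plus.IH(1) n1 by auto
  have IH2: "finite T2" "\<And>w. path T2 i2 w f2 \<longleftrightarrow> w \<in> lang s" using Plus.IH(2) n2 by auto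
  have "path T [] w [2] \<longleftrightarrow> w \<in> lang r \<union> lang s" for w
  proof
    assume "path T [] w [2]"
    define Lg where "Lg = (\<lambda>x. case x of [] \<Rightarrow> lang r \<union> lang s
       | k # q \<Rightarrow> if k = 0 then {w. path T1 q w f1} else if k = 1 then {w. path T2 q w f2} else {[]})"
    have "w \<in> Lg []"
    proof (rule path_sound[OF \<open>path T [] w [2]\<close>])
      show "[] \<in> Lg [2]" by (simp add: Lg_def)
    next
      fix x y assume xy: "(x, None, y) \<in> T"
      then consider "(x, None, y) \<in> tag 0 T1" | "(x, None, y) \<in> tag 1 T2"
        | "x = [] \<and> y = [0] @ i1" | "x = [] \<and> y = [1] @ i2" | "x = 0 # f1 \<and> y = [2]" | "x = 1 # f2 \<and> y = [2]"
        unfolding T_def by fastforce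
      then show "Lg y \<subseteq> Lg x"
      proof cases
        case 1 then obtain p q where "x = 0 # p" "y = 0 # q" "(p, None, q) \<in> T1" by (blast dest: tag_mem2)
        then show ?thesis by (auto simp: Lg_def intro: pe)
      next
        case 2 then obtain p q where "x = 1 # p" "y = 1 # q" "(p, None, q) \<in> T2" by (blast dest: tag_mem2)
        then show ?thesis by (auto simp: Lg_def intro: pe)
      next
        case 3 then show ?thesis using IH1 by (auto simp: Lg_def)
      next
        case 4 then show ?thesis using IH2 by (auto simp: Lg_def)
      next
        case 5 then show ?thesis by (auto simp: Lg_def intro: pnil)
      next
        case 6 then show ?thesis by (auto simp: Lg_def intro: pnil)
      qed
    next
      fix x a y w' assume xy: "(x, Some a, y) \<in> T" "w' \<in> Lg y"
      then consider "(x, Some a, y) \<in> tag 0 T1" | "(x, Some a, y) \<in> tag 1 T2"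
        unfolding T_def by fastforce
      then show "a # w' \<in> Lg x"
      proof cases
        case 1 then obtain p q where "x = 0 # p" "y = 0 # q" "(p, Some a, q) \<in> T1" by (blast dest: tag_mem2)
        then show ?thesis using xy by (auto simp: Lg_def intro: pa)
      next
        case 2 then obtain p q where "x = 1 # p" "y = 1 # q" "(p, Some a, q) \<in> T2" by (blast dest: tag_mem2)
        then show ?thesis using xy by (auto simp: Lg_def intro: pa)
      qed
    qed
    then show "w \<in> lang r \<union> lang s" by (simp add: Lg_def)
  next
    assume "w \<in> lang r \<union> lang s"
    then show "path T [] w [2]"
    proof
      assume "w \<in> lang r"
      then have "path T1 i1 w f1" using IH1 by simp
      then have "path T (0 # i1) w (0 # f1)" by (rule path_mono[OF path_tag]) (auto simp: T_def)
      moreover have "path T (0 # f1) [] [2]"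
        by (rule pe[where p'="[2]"]) (auto simp: T_def intro: pnil)
      ultimately have "path T (0 # i1) (w @ []) [2]"
        by (rule path_trans)
      then have "path T (0 # i1) w [2]" by simp
      then show ?thesis by (rule pe[rotated]) (simp add: T_def)
    next
      assume "w \<in> lang s"
      then have "path T2 i2 w f2" using IH2 by simp
      then have "path T (1 # i2) w (1 # f2)" by (rule path_mono[OF path_tag]) (auto simp: T_def)
      moreover have "path T (1 # f2) [] [2]"
        by (rule pe[where p'="[2]"]) (auto simp: T_def intro: pnil)
      ultimately have "path T (1 # i2) (w @ []) [2]"
        by (rule path_trans)
      then have "path T (1 # i2) w [2]" by simp
      then show ?thesis by (rule pe[rotated]) (simp add: T_def)
    qed
  qed
  then show ?case using IH1 IH2 by (simp add: n1 n2 T_def)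
next
  case (Times r s)
  obtain T1 i1 f1 where n1: "nfa r = (T1, i1, f1)" by (cases "nfa r")
  obtain T2 i2 f2 where n2: "nfa s = (T2, i2, f2)" by (cases "nfa s")
  define T where "T = tag 0 T1 \<union> tag 1 T2 \<union> {(0 # f1, None, 1 # i2)}"
  have IH1: "finite T1" "\<And>w. path T1 i1 w f1 \<longleftrightarrow> w \<in> lang r" using Times.IH(1) n1 by auto
  have IH2: "finite T2" "\<And>w. path T2 i2 w f2 \<longleftrightarrow> w \<in> lang s" using Times.IH(2) n2 by auto
  have "path T (0 # i1) w (1 # f2) \<longleftrightarrow> w \<in> conc (lang r) (lang s)" for w
  proof
    assume "path T (0 # i1) w (1 # f2)"
    define Lg where "Lg = (\<lambda>x. case x of [] \<Rightarrow> {}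
       | k # q \<Rightarrow> if k = 0 then conc {w. path T1 q w f1} (lang s) else {w. path T2 q w f2})"
    have "w \<in> Lg (0 # i1)"
    proof (rule path_sound[OF \<open>path T (0 # i1) w (1 # f2)\<close>])
      show "[] \<in> Lg (1 # f2)" by (simp add: Lg_def pnil)
    next
      fix x y assume xy: "(x, None, y) \<in> T"
      then consider "(x, None, y) \<in> tag 0 T1" | "(x, None, y) \<in> tag 1 T2"
        | "x = 0 # f1 \<and> y = 1 # i2"
        unfolding T_def by fastforce
      then show "Lg y \<subseteq> Lg x"
      proof cases
        case 1 then obtain p q where "x = 0 # p" "y = 0 # q" "(p, None, q) \<in> T1" by (blast dest: tag_mem2)
        then show ?thesis by (auto simp: Lg_def conc_def intro: pe)
      next
        case 2 then obtain p q where "x = 1 # p" "y = 1 # q" "(p, None, q) \<in> T2" by (blast dest: tag_mem2)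
        then show ?thesis by (auto simp: Lg_def intro: pe)
      next
        case 3
        have "lang s \<subseteq> conc {w. path T1 f1 w f1} (lang s)"
          unfolding conc_def by (auto intro: pnil)
        then show ?thesis using 3 IH2 by (auto simp: Lg_def)
      qed
    next
      fix x a y w' assume xy: "(x, Some a, y) \<in> T" "w' \<in> Lg y"
      then consider "(x, Some a, y) \<in> tag 0 T1" | "(x, Some a, y) \<in> tag 1 T2"
        unfolding T_def by fastforce
      then show "a # w' \<in> Lg x"
      proof cases
        case 1 then obtain p q where pq: "x = 0 # p" "y = 0 # q" "(p, Some a, q) \<in> T1" by (blast dest: tag_mem2)
        then obtain u v where "w' = u @ v" "path T1 q u f1" "v \<in> lang s"
          using xy(2) by (auto simp: Lg_def conc_def)
        then show ?thesis using pq unfolding Lg_def conc_def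
          by simp (metis append_Cons path.pa)
      next
        case 2 then obtain p q where "x = 1 # p" "y = 1 # q" "(p, Some a, q) \<in> T2" by (blast dest: tag_mem2)
        then show ?thesis using xy by (auto simp: Lg_def intro: pa)
      qed
    qed
    then show "w \<in> conc (lang r) (lang s)" using IH1 by (simp add: Lg_def)
  next
    assume "w \<in> conc (lang r) (lang s)"
    then obtain u v where w: "w = u @ v" "u \<in> lang r" "v \<in> lang s" unfolding conc_def by auto
    have "path T1 i1 u f1" using w IH1 by simp
    then have "path T (0 # i1) u (0 # f1)" by (rule path_mono[OF path_tag]) (auto simp: T_def)
    moreover have "path T2 i2 v f2" using w IH2 by simp
    then have "path T (1 # i2) v (1 # f2)" by (rule path_mono[OF path_tag]) (auto simp: T_def)
    then have "path T (0 # f1) v (1 # f2)" by (rule pe[rotated]) (simp add: T_def)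
    ultimately have "path T (0 # i1) (u @ v) (1 # f2)" by (rule path_trans)
    then show "path T (0 # i1) w (1 # f2)" using w by simp
  qed
  then show ?case using IH1 IH2 by (simp add: n1 n2 T_def)
next
  case (Star r)
  obtain T1 i1 f1 where n1: "nfa r = (T1, i1, f1)" by (cases "nfa r")
  define T where "T = tag 0 T1 \<union> {([], None, 0 # i1), (0 # f1, None, [])}"
  have IH1: "finite T1" "\<And>w. path T1 i1 w f1 \<longleftrightarrow> w \<in> lang r" using Star.IH n1 by auto
  have "path T [] w [] \<longleftrightarrow> w \<in> star (lang r)" for w
  proof
    assume "path T [] w []"
    define Lg where "Lg = (\<lambda>x. case x of [] \<Rightarrow> star (lang r)
       | k # q \<Rightarrow> conc {w. path T1 q w f1} (star (lang r)))"
    have "w \<in> Lg []"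
    proof (rule path_sound[OF \<open>path T [] w []\<close>])
      show "[] \<in> Lg []" by (simp add: Lg_def star.intros)
    next
      fix x y assume xy: "(x, None, y) \<in> T"
      then consider "(x, None, y) \<in> tag 0 T1" | "x = [] \<and> y = 0 # i1" | "x = 0 # f1 \<and> y = []"
        unfolding T_def by fastforce
      then show "Lg y \<subseteq> Lg x"
      proof cases
        case 1 then obtain p q where "x = 0 # p" "y = 0 # q" "(p, None, q) \<in> T1" by (blast dest: tag_mem2)
        then show ?thesis by (auto simp: Lg_def conc_def intro: pe)
      next
        case 2
        have "conc {w. path T1 i1 w f1} (star (lang r)) \<subseteq> star (lang r)"
          using IH1 unfolding conc_def by (auto intro: star.intros)
        then show ?thesis using 2 by (simp add: Lg_def)
      next
        case 3
        have "star (lang r) \<subseteq> conc {w. path T1 f1 w f1} (star (lang r))"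
          unfolding conc_def by (auto intro: pnil)
        then show ?thesis using 3 by (simp add: Lg_def)
      qed
    next
      fix x a y w' assume xy: "(x, Some a, y) \<in> T" "w' \<in> Lg y"
      then have "(x, Some a, y) \<in> tag 0 T1"
        unfolding T_def by fastforce
      then obtain p q where pq: "x = 0 # p" "y = 0 # q" "(p, Some a, q) \<in> T1" by (blast dest: tag_mem2)
      then obtain u v where "w' = u @ v" "path T1 q u f1" "v \<in> star (lang r)"
        using xy(2) by (auto simp: Lg_def conc_def)
      then show "a # w' \<in> Lg x" using pq unfolding Lg_def conc_def
        by simp (metis append_Cons path.pa)
    qed
    then show "w \<in> star (lang r)" by (simp add: Lg_def)
  next
    assume "w \<in> star (lang r)"
    then show "path T [] w []"
    proof induction
      case star_Nil then show ?case by (rule pnil)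
    next
      case (star_app u v)
      have "path T1 i1 u f1" using star_app IH1 by simp
      then have "path T (0 # i1) u (0 # f1)" by (rule path_mono[OF path_tag]) (auto simp: T_def)
      moreover have "path T (0 # f1) v []" using star_app.IH by (rule pe[rotated]) (simp add: T_def)
      ultimately have "path T (0 # i1) (u @ v) []" by (rule path_trans)
      then show ?case by (rule pe[rotated]) (simp add: T_def)
    qed
  qed
  then show ?case using IH1 by (simp add: n1 T_def)
qed

section \<open>Grammar semantics\<close>

fun sem :: "(nat \<Rightarrow> 'a list set) \<Rightarrow> (nat + 'a) list \<Rightarrow> 'a list set" where
  "sem Lg [] = {[]}"
| "sem Lg (Inl A # s) = conc (Lg A) (sem Lg s)"
| "sem Lg (Inr a # s) = conc {[a]} (sem Lg s)"

lemma sem_append: "sem Lg (u @ v) = conc (sem Lg u) (sem Lg v)"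
proof (induction u)
  case Nil then show ?case by simp
next
  case (Cons x u)
  then show ?case by (cases x) (simp_all add: conc_assoc[symmetric] del: conc_single_left)
qed

lemma sem_map_Inr[simp]: "sem Lg (map Inr w) = {w}"
  by (induction w) auto

lemma step_sound:
  assumes "cfg_step P s t" "\<And>A rhs. (A, rhs) \<in> P \<Longrightarrow> sem Lg rhs \<subseteq> Lg A"
  shows "sem Lg t \<subseteq> sem Lg s"
  using assms(1)
proof cases
  case (1 A rhs u v)
  then have "sem Lg rhs \<subseteq> sem Lg [Inl A]" using assms(2) by simp
  then show ?thesis using 1 by (simp add: sem_append conc_mono)
qed

lemma steps_sound:
  assumes "(cfg_step P)\<^sup>*\<^sup>* s t" "\<And>A rhs. (A, rhs) \<in> P \<Longrightarrow> sem Lg rhs \<subseteq> Lg A"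
  shows "sem Lg t \<subseteq> sem Lg s"
  using assms(1) by induction (use step_sound[OF _ assms(2)] in blast)+

lemma step_ctx: "cfg_step P s t \<Longrightarrow> cfg_step P (u @ s @ v) (u @ t @ v)"
proof (induction rule: cfg_step.induct)
  case (1 A rhs u' v')
  then show ?case using cfg_step.intros[OF 1, of "u @ u'" "v' @ v"] by simp
qed

lemma steps_ctx: "(cfg_step P)\<^sup>*\<^sup>* s t \<Longrightarrow> (cfg_step P)\<^sup>*\<^sup>* (u @ s @ v) (u @ t @ v)"
  by (induction rule: rtranclp_induct) (auto intro: rtranclp.rtrancl_into_rtrancl step_ctx)

lemma step_single: "(A, rhs) \<in> P \<Longrightarrow> cfg_step P [Inl A] rhs"
  using cfg_step.intros[of A rhs P "[]" "[]"] by simp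

section \<open>The grammar for bdr\<close>

definition Nn :: "'s::countable \<Rightarrow> nat" where "Nn q = 2 * to_nat q"
definition En :: "'s::countable \<Rightarrow> nat" where "En q = Suc (2 * to_nat q)"

fun eprods :: "('s::countable \<times> 'a option \<times> 's) \<Rightarrow> (nat \<times> (nat + 'a) list) set" where
  "eprods (p, None, p') = {(Nn p, [Inl (Nn p')]), (En p, [Inl (En p')])}"
| "eprods (p, Some a, p') = {(Nn p, [Inr a, Inl (En p')]), (En p, [Inl (Nn p'), Inr a])}"

definition prods :: "('s::countable \<times> 'a option \<times> 's) set \<Rightarrow> 's \<Rightarrow> (nat \<times> (nat + 'a) list) set" where
  "prods T f = {(Nn f, []), (En f, [])} \<union> (\<Union>e\<in>T. eprods e)"

lemma finite_eprods: "finite (eprods e)"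
  by (cases e rule: eprods.cases) auto

lemma finite_prods: "finite T \<Longrightarrow> finite (prods T f)"
  unfolding prods_def using finite_eprods by auto

lemma prods_complete:
  assumes "path T q w f"
  shows "(cfg_step (prods T f))\<^sup>*\<^sup>* [Inl (Nn q)] (map Inr (bdr w)) \<and>
         (cfg_step (prods T f))\<^sup>*\<^sup>* [Inl (En q)] (map Inr (bdr2 w))"
  using assms
proof induction
  case (pnil p)
  have "(Nn p, []) \<in> prods T p" "(En p, []) \<in> prods T p" by (auto simp: prods_def)
  then show ?case by (auto dest!: step_single)
next
  case (pa p a p' w g)
  let ?P = "prods T g"
  have e1: "(Nn p, [Inr a, Inl (En p')]) \<in> ?P" and e2: "(En p, [Inl (Nn p'), Inr a]) \<in> ?P"
    using pa.hyps(1) unfolding prods_def by force+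
  have "(cfg_step ?P)\<^sup>*\<^sup>* ([Inr a] @ [Inl (En p')] @ []) ([Inr a] @ map Inr (bdr2 w) @ [])"
    using pa.IH by (intro steps_ctx) simp
  then have 1: "(cfg_step ?P)\<^sup>*\<^sup>* [Inl (Nn p)] (map Inr (bdr (a # w)))"
    using step_single[OF e1] by (simp add: bdr_Cons)
  have "(cfg_step ?P)\<^sup>*\<^sup>* ([] @ [Inl (Nn p')] @ [Inr a]) ([] @ map Inr (bdr w) @ [Inr a])"
    using pa.IH by (intro steps_ctx) simp
  then have 2: "(cfg_step ?P)\<^sup>*\<^sup>* [Inl (En p)] (map Inr (bdr2 (a # w)))"
    using step_single[OF e2] by (simp add: bdr2_Cons)
  show ?case using 1 2 by simp
next
  case (pe p p' w g)
  let ?P = "prods T g"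
  have e1: "(Nn p, [Inl (Nn p')]) \<in> ?P" and e2: "(En p, [Inl (En p')]) \<in> ?P"
    using pe.hyps(1) unfolding prods_def by force+
  show ?case using pe.IH step_single[OF e1] step_single[OF e2]
    by (auto intro: converse_rtranclp_into_rtranclp)
qed

definition LgA :: "('s::countable \<times> 'a option \<times> 's) set \<Rightarrow> 's \<Rightarrow> nat \<Rightarrow> 'a list set" where
  "LgA T f n = (if even n then bdr ` {w. path T (from_nat (n div 2)) w f}
                else bdr2 ` {w. path T (from_nat (n div 2)) w f})"

lemma LgA_Nn[simp]: "LgA T f (Nn q) = bdr ` {w. path T q w f}"
  by (simp add: LgA_def Nn_def)

lemma LgA_En[simp]: "LgA T f (En q) = bdr2 ` {w. path T q w f}"
  by (simp add: LgA_def En_def)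

lemma prods_sound:
  assumes "(A, rhs) \<in> prods T f"
  shows "sem (LgA T f) rhs \<subseteq> LgA T f A"
proof -
  have "[] \<in> bdr ` {w. path T f w f}" "[] \<in> bdr2 ` {w. path T f w f}"
    by (metis (mono_tags) bdr_Nil bdr2_Nil image_eqI mem_Collect_eq pnil)+
  moreover have "sem (LgA T f) rhs \<subseteq> LgA T f A" if "e \<in> T" "(A, rhs) \<in> eprods e" for e
  proof (cases e rule: eprods.cases)
    case (1 p p')
    have "path T p' w f \<Longrightarrow> path T p w f" for w using 1 that(1) by (blast intro: pe)
    then show ?thesis using 1 that by auto
  next
    case (2 p a p')
    then show ?thesis using that
      by (auto simp: bdr_Cons[symmetric] bdr2_Cons[symmetric] intro!: imageI pa)
  qed
  ultimately show ?thesis using assms unfolding prods_def by auto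
qed

theorem mainTheorem12:
  fixes L :: "'a list set"
  assumes "regular L"
  shows "context_free (bdr_lang L)"
proof -
  obtain r where r: "lang r = L" using assms unfolding regular_def by blast
  obtain T i f where n: "nfa r = (T, i, f)" by (cases "nfa r")
  have fin: "finite T" and acc: "\<And>w. path T i w f \<longleftrightarrow> w \<in> L"
    using nfa_correct[of r] n r by auto
  let ?P = "prods T f"
  have "cfg_lang ?P (Nn i) = bdr_lang L"
  proof
    show "cfg_lang ?P (Nn i) \<subseteq> bdr_lang L"
    proof
      fix w assume "w \<in> cfg_lang ?P (Nn i)"
      then have "(cfg_step ?P)\<^sup>*\<^sup>* [Inl (Nn i)] (map Inr w)" by (simp add: cfg_lang_def)
      then have "sem (LgA T f) (map Inr w) \<subseteq> sem (LgA T f) [Inl (Nn i)]"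
        by (rule steps_sound) (rule prods_sound)
      then show "w \<in> bdr_lang L" using acc by (auto simp: bdr_lang_def)
    qed
  next
    show "bdr_lang L \<subseteq> cfg_lang ?P (Nn i)"
    proof
      fix x assume "x \<in> bdr_lang L"
      then obtain w where "x = bdr w" "w \<in> L" by (auto simp: bdr_lang_def)
      then have "path T i w f" using acc by simp
      from prods_complete[OF this] \<open>x = bdr w\<close> show "x \<in> cfg_lang ?P (Nn i)"
        by (simp add: cfg_lang_def)
    qed
  qed
  then show ?thesis unfolding context_free_def using finite_prods[OF fin] by blast
qed

end
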